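(* Let $F=\{f_i\}_{i=1}^N$ be a uniform tight frame for an $n$-dimensional Hilbert space $\mathcal{H}_n$ and let $p>1$. Then the canonical dual $S_F^{-1}F=\{S_F^{-1}f_i\}_{i=1}^N$ is a $1$-erasure spectrally optimal dual of $F$, i.e. $S_F^{-1}F\in\zeta_{\mathfrak{R}}^{(1),p}(F)$.
   Context: A uniform tight frame is a frame with $\sum_i|\langle f,f_i\rangle|^2=A\|f\|^2$ for all $f$ (some $A>0$) and all $\|f_i\|$ equal; $S_F$ is the frame operator $S_Ff=\sum_i\langle f,f_i\rangle f_i$. $G=\{g_i\}$ is a dual of $F$ if $f=\sum_i\langle f,f_i\rangle g_i$ for all $f$. For a dual $G$, $\mathrm{AE}_{\mathfrak{R}}^{(1),p}(F,G)=\{\frac1N\sum_{i=1}^N|\langle f_i,g_i\rangle|^p\}^{1/p}$ (the $\ell^p$-average of the spectral radii of the one-erasure error operators $f\mapsto\langle f,f_i\rangle g_i$), and $\zeta_{\mathfrak{R}}^{(1),p}(F)$ is the set of duals minimizing it over all duals of $F$. *)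

theory Defs
  imports "HOL-Analysis.Analysis"
begin

text \<open>The n-dimensional complex Hilbert space H_n is modelled as complex^'n
  (index type 'n finite, n = CARD('n)) with its standard inner product,
  linear in the first argument.\<close>

definition cinner :: "complex ^ 'n \<Rightarrow> complex ^ 'n \<Rightarrow> complex" where
  "cinner x y = (\<Sum>k\<in>UNIV. x $ k * cnj (y $ k))"

definition hnorm :: "complex ^ 'n \<Rightarrow> real" where
  "hnorm x = sqrt (Re (cinner x x))"

text \<open>A finite sequence F = {f_i}, i < N (0-based indexing).\<close>

definition frame_op :: "nat \<Rightarrow> (nat \<Rightarrow> complex ^ 'n) \<Rightarrow> complex ^ 'n \<Rightarrow> complex ^ 'n" where
  "frame_op N F f = (\<Sum>i<N. cinner f (F i) *s F i)"

definition tight_frame :: "nat \<Rightarrow> (nat \<Rightarrow> complex ^ 'n) \<Rightarrow> bool" where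
  "tight_frame N F \<longleftrightarrow> (\<exists>A>0. \<forall>f. (\<Sum>i<N. (cmod (cinner f (F i)))\<^sup>2) = A * (hnorm f)\<^sup>2)"

definition uniform_tight_frame :: "nat \<Rightarrow> (nat \<Rightarrow> complex ^ 'n) \<Rightarrow> bool" where
  "uniform_tight_frame N F \<longleftrightarrow> tight_frame N F \<and> (\<forall>i<N. \<forall>j<N. hnorm (F i) = hnorm (F j))"

definition is_dual :: "nat \<Rightarrow> (nat \<Rightarrow> complex ^ 'n) \<Rightarrow> (nat \<Rightarrow> complex ^ 'n) \<Rightarrow> bool" where
  "is_dual N F G \<longleftrightarrow> (\<forall>f. f = (\<Sum>i<N. cinner f (F i) *s G i))"

text \<open>l^p-average of the spectral radii |<f_i,g_i>| of the one-erasure error operators.\<close>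

definition AE_R1 :: "real \<Rightarrow> nat \<Rightarrow> (nat \<Rightarrow> complex ^ 'n) \<Rightarrow> (nat \<Rightarrow> complex ^ 'n) \<Rightarrow> real" where
  "AE_R1 p N F G = ((1 / real N) * (\<Sum>i<N. cmod (cinner (F i) (G i)) powr p)) powr (1 / p)"

definition zeta_R1 :: "real \<Rightarrow> nat \<Rightarrow> (nat \<Rightarrow> complex ^ 'n) \<Rightarrow> (nat \<Rightarrow> complex ^ 'n) set" where
  "zeta_R1 p N F = {G. is_dual N F G \<and> (\<forall>G'. is_dual N F G' \<longrightarrow> AE_R1 p N F G \<le> AE_R1 p N F G')}"

definition canonical_dual :: "nat \<Rightarrow> (nat \<Rightarrow> complex ^ 'n) \<Rightarrow> nat \<Rightarrow> complex ^ 'n" where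
  "canonical_dual N F i = inv (frame_op N F) (F i)"

end

theory Submission
  imports Defs
begin
lemma tangent_powr:
  fixes x c p :: real
  assumes "x \<ge> 0" "c > 0" "p > 1"
  shows "x powr p \<ge> c powr p + p * c powr (p - 1) * (x - c)"
proof (cases "x = 0")
  case True
  have "c powr (p-1) * c = c powr p" using assms(2)
    by (simp add: powr_diff)
  then have "p * c powr (p - 1) * (0 - c) = - p * c powr p" by (simp add: algebra_simps)
  moreover have "c powr p \<le> p * c powr p" using assms by simp
  ultimately show ?thesis using True assms by (simp add: mult.assoc)
next
  case False
  have d: "((\<lambda>x. x powr p) has_field_derivative p * c powr (p - 1)) (at c within {0<..})"
    using assms by (auto intro!: derivative_eq_intros)
  have "x powr p - c powr p \<ge> p * c powr (p - 1) * (x - c)"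
    by (rule convex_on_imp_above_tangent[OF powr_convex _ _ _ d]) (use assms False in \<open>auto simp: interior_open\<close>)
  then show ?thesis by simp
qed

lemma power_mean:
  fixes a :: "nat \<Rightarrow> real" and N :: nat and p c :: real
  assumes "N > 0" "p > 1" "c > 0" "\<And>i. a i \<ge> 0" "real N * c \<le> (\<Sum>i<N. a i)"
  shows "c \<le> ((1 / real N) * (\<Sum>i<N. a i powr p)) powr (1/p)"
proof -
  have "(\<Sum>i<N. a i powr p) \<ge> (\<Sum>i<N. c powr p + p * c powr (p - 1) * (a i - c))"
    by (intro sum_mono tangent_powr) (use assms in auto)
  also have "(\<Sum>i<N. c powr p + p * c powr (p - 1) * (a i - c)) =
     real N * c powr p + p * c powr (p - 1) * ((\<Sum>i<N. a i) - real N * c)"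
    by (simp add: sum.distrib sum_distrib_left sum_distrib_right sum_subtractf algebra_simps)
  also have "\<dots> \<ge> real N * c powr p"
    using assms by (intro add_increasing2 mult_nonneg_nonneg) auto
  finally have "c powr p \<le> (1 / real N) * (\<Sum>i<N. a i powr p)"
    using assms by (simp add: field_simps)
  then have "(c powr p) powr (1/p) \<le> ((1 / real N) * (\<Sum>i<N. a i powr p)) powr (1/p)"
    using assms by (intro powr_mono2) auto
  then show ?thesis using assms by (simp add: powr_powr)
qed
lemma ci_add_left: "cinner (x + y) z = cinner x z + cinner y z"
  by (simp add: cinner_def algebra_simps sum.distrib)
lemma ci_add_right: "cinner z (x + y) = cinner z x + cinner z y"
  by (simp add: cinner_def algebra_simps sum.distrib)
lemma ci_scale_left: "cinner (c *s x) y = c * cinner x y"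
  by (simp add: cinner_def sum_distrib_left algebra_simps)
lemma ci_scale_right: "cinner x (c *s y) = cnj c * cinner x y"
  by (simp add: cinner_def sum_distrib_left algebra_simps)
lemma ci_commute: "cinner y x = cnj (cinner x y)"
  by (simp add: cinner_def mult.commute)
lemma ci_sum_left: "cinner (\<Sum>i\<in>I. g i) y = (\<Sum>i\<in>I. cinner (g i) y)"
  unfolding cinner_def by (simp add: sum_distrib_right) (rule sum.swap)
lemma ci_self: "cinner x x = complex_of_real (\<Sum>k\<in>UNIV. (cmod (x $ k))\<^sup>2)"
  unfolding cinner_def of_real_sum complex_norm_square ..
lemma ci_self_zero: assumes "cinner x x = 0" shows "x = 0"
proof -
  have "complex_of_real (\<Sum>k\<in>UNIV. (cmod (x $ k))\<^sup>2) = 0" using assms ci_self[of x] by metis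
  then have "(\<Sum>k\<in>UNIV. (cmod (x $ k))\<^sup>2) = 0" by (simp only: of_real_eq_0_iff)
  then have "\<forall>k\<in>UNIV. (cmod (x $ k))\<^sup>2 = 0" by (subst (asm) sum_nonneg_eq_0_iff) auto
  then show ?thesis by (simp add: vec_eq_iff)
qed
lemma hnorm_sq: "(hnorm x)\<^sup>2 = Re (cinner x x)"
  unfolding hnorm_def by (simp add: ci_self sum_nonneg)

lemma polarization:
  fixes T :: "complex ^ 'n \<Rightarrow> complex ^ 'n"
  assumes add: "\<And>x y. T (x + y) = T x + T y"
    and sc: "\<And>c x. T (c *s x) = c *s T x"
    and q: "\<And>f. cinner (T f) f = 0"
  shows "T x = 0"
proof -
  have B: "cinner (T x) y = 0" for y
  proof -
    have 1: "cinner (T x) y + cinner (T y) x = 0"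
      using q[of "x + y"] q[of x] q[of y] by (simp add: add ci_add_left ci_add_right add.commute)
    have "cinner (T (x + \<i> *s y)) (x + \<i> *s y) = - \<i> * cinner (T x) y + \<i> * cinner (T y) x"
      using q[of x] q[of y] by (simp add: add sc ci_add_left ci_add_right ci_scale_left ci_scale_right algebra_simps)
    then have 2: "cinner (T x) y = cinner (T y) x" using q[of "x + \<i> *s y"]
      by (metis add.commute add_cancel_right_left complex_i_not_zero mult_cancel_left mult_minus_left neg_eq_iff_add_eq_0)
    from 1 2 show ?thesis by simp
  qed
  show ?thesis using B[of "T x"] ci_self_zero by blast
qed

lemma frame_op_add: "frame_op N F (x + y) = frame_op N F x + frame_op N F y"
  by (simp add: frame_op_def ci_add_left scaleR_add_left vector_sadd_rdistrib sum.distrib)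
lemma frame_op_scale: "frame_op N F (c *s x) = c *s frame_op N F x"
  by (simp add: frame_op_def ci_scale_left vec_eq_iff sum_distrib_left mult.assoc)

lemma tight_frame_op:
  assumes "tight_frame N F"
  obtains A where "A > 0" "frame_op N F = (\<lambda>f. complex_of_real A *s f)"
proof -
  obtain A where A: "A > 0" "\<And>f. (\<Sum>i<N. (cmod (cinner f (F i)))\<^sup>2) = A * (hnorm f)\<^sup>2"
    using assms unfolding tight_frame_def by blast
  define T where "T f = frame_op N F f - complex_of_real A *s f" for f
  have q: "cinner (T f) f = 0" for f
  proof -
    have "cinner (frame_op N F f) f = (\<Sum>i<N. cinner f (F i) * cinner (F i) f)"
      unfolding frame_op_def by (simp add: ci_sum_left ci_scale_left)
    also have "\<dots> = (\<Sum>i<N. complex_of_real ((cmod (cinner f (F i)))\<^sup>2))"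
      by (intro sum.cong refl) (metis ci_commute complex_mult_cnj complex_norm_square of_real_power)
    also have "\<dots> = complex_of_real (A * (hnorm f)\<^sup>2)" by (subst of_real_sum[symmetric]) (simp only: A(2))
    also have "\<dots> = complex_of_real A * cinner f f"
      by (simp add: hnorm_sq ci_self)
    finally show ?thesis unfolding T_def
      by (simp add: cinner_def sum_subtractf algebra_simps sum_distrib_left)
  qed
  have ad: "T (x + y) = T x + T y" for x y
    by (auto simp: T_def frame_op_add vec_eq_iff algebra_simps)
  have sc: "T (c *s x) = c *s T x" for c x
    by (auto simp: T_def frame_op_scale vec_eq_iff algebra_simps)
  have "T x = 0" for x
    by (rule polarization[of T, OF ad sc q])
  then have "frame_op N F = (\<lambda>f. complex_of_real A *s f)" by (auto simp: T_def fun_eq_iff)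
  then show ?thesis using A(1) that by blast
qed

lemma dual_trace:
  fixes F G :: "nat \<Rightarrow> complex ^ 'n"
  assumes "is_dual N F G"
  shows "(\<Sum>i<N. cinner (F i) (G i)) = of_nat CARD('n)"
proof -
  have "1 = (\<Sum>i<N. cnj (F i $ k) * G i $ k)" for k
  proof -
    have "axis k 1 = (\<Sum>i<N. cinner (axis k 1) (F i) *s G i)"
      using assms unfolding is_dual_def by blast
    then have "axis k (1::complex) $ k = (\<Sum>i<N. cinner (axis k 1) (F i) *s G i) $ k" by simp
    moreover have "cinner (axis k 1) (F i) = cnj (F i $ k)" for i
      unfolding cinner_def axis_def
      by (subst sum.cong[OF refl, of _ _ "\<lambda>ka. if ka = k then cnj (F i $ ka) else 0"]) auto
    ultimately show ?thesis by simp
  qed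
  then have "(\<Sum>k\<in>(UNIV::'n set). (1::complex)) = (\<Sum>k\<in>UNIV. \<Sum>i<N. cnj (F i $ k) * G i $ k)" by simp
  also have "\<dots> = (\<Sum>i<N. cnj (cinner (F i) (G i)))"
    unfolding cinner_def by (subst sum.swap) (simp add: mult.commute)
  finally have "cnj (\<Sum>i<N. cinner (F i) (G i)) = of_nat CARD('n)" by simp
  then show ?thesis by (metis complex_cnj_cnj complex_cnj_of_nat)
qed

theorem corollary5p2:
  fixes N :: nat and F :: "nat \<Rightarrow> complex ^ 'n" and p :: real
  assumes "uniform_tight_frame N F"
    and "p > 1"
  shows "canonical_dual N F \<in> zeta_R1 p N F"
proof -
  have tf: "tight_frame N F" and un: "\<And>i j. i < N \<Longrightarrow> j < N \<Longrightarrow> hnorm (F i) = hnorm (F j)"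
    using assms(1) unfolding uniform_tight_frame_def by blast+
  obtain A where A: "A > 0" and S: "frame_op N F = (\<lambda>f. complex_of_real A *s f)"
    by (rule tight_frame_op[OF tf])
  define c where "c = complex_of_real (1 / A)"
  have cA: "c * complex_of_real A = 1" using A by (simp add: c_def flip: of_real_mult)
  have inj: "inj (frame_op N F)"
    by (rule inj_on_inverseI[of _ "\<lambda>y. c *s y"]) (simp add: S vector_smult_assoc cA)
  have G: "canonical_dual N F i = c *s F i" for i
    unfolding canonical_dual_def
    by (rule inv_f_eq[OF inj]) (simp add: S vector_smult_assoc mult.commute[of _ c] cA)
  have dual: "is_dual N F (canonical_dual N F)"
    unfolding is_dual_def
  proof
    fix f :: "complex ^ 'n"
    have "(\<Sum>i<N. cinner f (F i) *s canonical_dual N F i) = c *s frame_op N F f"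
      by (simp add: G frame_op_def vec_eq_iff sum_distrib_left algebra_simps)
    also have "\<dots> = f" by (simp add: S vector_smult_assoc cA)
    finally show "f = (\<Sum>i<N. cinner f (F i) *s canonical_dual N F i)" by simp
  qed
  define h where "h = (hnorm (F 0))\<^sup>2 / A"
  have ci: "cinner (F i) (canonical_dual N F i) = complex_of_real h" if "i < N" for i
  proof -
    have "cinner (F i) (canonical_dual N F i) = complex_of_real (1/A) * cinner (F i) (F i)"
      by (simp add: G ci_scale_right c_def)
    also have "cinner (F i) (F i) = complex_of_real ((hnorm (F i))\<^sup>2)"
      by (simp add: hnorm_sq ci_self)
    also have "hnorm (F i) = hnorm (F 0)" using un[of i 0] that by simp
    finally show ?thesis by (simp add: h_def)
  qed
  have tr: "(\<Sum>i<N. cinner (F i) (canonical_dual N F i)) = of_nat CARD('n)"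
    by (rule dual_trace[OF dual])
  then have "complex_of_real (real N * h) = of_nat CARD('n)"
    using ci by simp
  then have "complex_of_real (real N * h) = complex_of_real (real CARD('n))"
    by simp
  then have Nh: "real N * h = real CARD('n)"
    by (simp only: of_real_eq_iff)
  have cp: "real CARD('n) > 0" by simp
  have Npos: "N > 0" using Nh cp by (cases N) auto
  have "h \<ge> 0" unfolding h_def using A by simp
  moreover have "h \<noteq> 0" using Nh cp by auto
  ultimately have hpos: "h > 0" by simp
  have AEG: "AE_R1 p N F (canonical_dual N F) = h"
  proof -
    have "(\<Sum>i<N. cmod (cinner (F i) (canonical_dual N F i)) powr p) = (\<Sum>i<N. h powr p)"
      using ci hpos by (intro sum.cong refl) simp
    then show ?thesis unfolding AE_R1_def using Npos hpos assms(2)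
      by (simp add: powr_powr)
  qed
  have opt: "AE_R1 p N F (canonical_dual N F) \<le> AE_R1 p N F G'" if "is_dual N F G'" for G'
  proof -
    have "real N * h = cmod (\<Sum>i<N. cinner (F i) (G' i))"
      using dual_trace[OF that] Nh by simp
    also have "\<dots> \<le> (\<Sum>i<N. cmod (cinner (F i) (G' i)))" by (rule norm_sum)
    finally have "real N * h \<le> (\<Sum>i<N. cmod (cinner (F i) (G' i)))" .
    then have "h \<le> AE_R1 p N F G'" unfolding AE_R1_def
      by (intro power_mean) (use Npos assms(2) hpos in auto)
    then show ?thesis using AEG by simp
  qed
  show ?thesis unfolding zeta_R1_def using dual opt by blast
qed
end
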